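(* Let $\Omega\subset\mathbb{R}^d$ be open and $H:\overline\Omega\times\mathbb{R}^d\to\mathbb{R}$ be such that for a.e. $x\in\Omega$, $H(x,\cdot)\in C^1(\mathbb{R}^d)$ and $H(x,\cdot)$ is convex, and suppose there is $C>1$ with $|D_pH(x,p)|\le C|p|^{\alpha-1}+C$ and $H(x,0)\le C$ for a.e. $x\in\Omega$ and all $p\in\mathbb{R}^d$, where $\alpha>1$. Consider the conditions, each required for a.e. $x\in\Omega$ and all $p\in\mathbb{R}^d$ with some constant $C>1$: (a) $H(x,p)\ge C^{-1}|p|^\alpha-C$; (b) $D_pH(x,p)\cdot p\ge C^{-1}|p|^\alpha-C$ and $H(x,p)\ge-C$; (c) $-H(x,p)+D_pH(x,p)\cdot p\ge C^{-1}|p|^\alpha-C$ and $H(x,p)\ge-C$. Then (a), (b), (c) are equivalent (with the constant $C$ possibly changing). *)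

theory Defs
  imports "HOL-Analysis.Analysis"
begin

text \<open>H x p is the Hamiltonian; DH x p is its gradient D_p H(x,p) in the p variable.
  "a.e. x in Omega" is with respect to Lebesgue measure.\<close>

definition cond_a :: "'a::euclidean_space set \<Rightarrow> ('a \<Rightarrow> 'a \<Rightarrow> real) \<Rightarrow> real \<Rightarrow> bool" where
  "cond_a \<Omega> H \<alpha> \<longleftrightarrow> (\<exists>C>1. AE x in lebesgue. x \<in> \<Omega> \<longrightarrow>
      (\<forall>p. H x p \<ge> norm p powr \<alpha> / C - C))"

definition cond_b :: "'a::euclidean_space set \<Rightarrow> ('a \<Rightarrow> 'a \<Rightarrow> real) \<Rightarrow> ('a \<Rightarrow> 'a \<Rightarrow> 'a) \<Rightarrow> real \<Rightarrow> bool" where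
  "cond_b \<Omega> H DH \<alpha> \<longleftrightarrow> (\<exists>C>1. AE x in lebesgue. x \<in> \<Omega> \<longrightarrow>
      (\<forall>p. DH x p \<bullet> p \<ge> norm p powr \<alpha> / C - C \<and> H x p \<ge> - C))"

definition cond_c :: "'a::euclidean_space set \<Rightarrow> ('a \<Rightarrow> 'a \<Rightarrow> real) \<Rightarrow> ('a \<Rightarrow> 'a \<Rightarrow> 'a) \<Rightarrow> real \<Rightarrow> bool" where
  "cond_c \<Omega> H DH \<alpha> \<longleftrightarrow> (\<exists>C>1. AE x in lebesgue. x \<in> \<Omega> \<longrightarrow>
      (\<forall>p. - H x p + DH x p \<bullet> p \<ge> norm p powr \<alpha> / C - C \<and> H x p \<ge> - C))"

end

theory Submission imports Defs begin
lemma tangent: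
  fixes f :: "'a::euclidean_space \<Rightarrow> real"
  assumes cv: "convex_on UNIV f" and d: "(f has_derivative (\<lambda>v. D \<bullet> v)) (at p)"
  shows "f q \<ge> f p + D \<bullet> (q - p)"
proof -
  define g where "g = (\<lambda>t::real. f (p + t *\<^sub>R (q - p)))"
  have gc: "convex_on UNIV g"
    unfolding g_def
  proof (rule convex_onI)
    fix t x y :: real assume t: "0 < t" "t < 1"
    have "p + ((1 - t) * x + t * y) *\<^sub>R (q - p) = (1 - t) *\<^sub>R (p + x *\<^sub>R (q - p)) + t *\<^sub>R (p + y *\<^sub>R (q - p))"
      by (simp add: algebra_simps)
    then show "f (p + ((1 - t) *\<^sub>R x + t *\<^sub>R y) *\<^sub>R (q - p)) \<le> (1 - t) * f (p + x *\<^sub>R (q - p)) + t * f (p + y *\<^sub>R (q - p))"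
      using convex_onD[OF cv, of t "p + x *\<^sub>R (q - p)" "p + y *\<^sub>R (q - p)"] t by simp
  qed simp
  have l: "((\<lambda>t::real. p + t *\<^sub>R (q - p)) has_derivative (\<lambda>t. t *\<^sub>R (q - p))) (at 0)"
    by (auto intro!: derivative_eq_intros)
  have "(g has_derivative (\<lambda>t. D \<bullet> (t *\<^sub>R (q - p)))) (at 0)"
  proof -
    have d': "(f has_derivative (\<lambda>v. D \<bullet> v)) (at (p + (0::real) *\<^sub>R (q - p)))" using d by simp
    show ?thesis unfolding g_def using has_derivative_compose[OF l d'] by simp
  qed
  then have "(g has_field_derivative (D \<bullet> (q - p))) (at 0)"
    unfolding has_field_derivative_def by (rule has_derivative_eq_rhs) (auto simp: fun_eq_iff)
  from convex_on_imp_above_tangent[OF gc _ _ _ this, of 1]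
  have "g 1 - g 0 \<ge> D \<bullet> (q - p)" by simp
  then show ?thesis by (simp add: g_def)
qed
lemma pt_ab:
  fixes h :: "'a::euclidean_space \<Rightarrow> real"
  assumes tg: "\<And>p q. h q \<ge> h p + D p \<bullet> (q - p)" and h0: "h 0 \<le> C"
    and K: "\<And>p. h p \<ge> norm p powr \<alpha> / K - K" and "K > 1" "C > 1"
  shows "D p \<bullet> p \<ge> norm p powr \<alpha> / (K + C) - (K + C) \<and> h p \<ge> - (K + C)"
proof -
  have n: "norm p powr \<alpha> / (K + C) \<le> norm p powr \<alpha> / K"
    using assms by (intro divide_left_mono) auto
  have "h 0 \<ge> h p + D p \<bullet> (0 - p)" by (rule tg)
  then have "D p \<bullet> p \<ge> h p - C" using h0 by simp
  moreover have "h p \<ge> - K" using K[of p] \<open>K > 1\<close>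
    by (smt (verit) divide_nonneg_pos powr_ge_zero)
  ultimately show ?thesis using K[of p] n \<open>C > 1\<close> by linarith
qed

lemma pt_cb:
  fixes h :: "'a::euclidean_space \<Rightarrow> real"
  assumes K: "\<And>p. - h p + D p \<bullet> p \<ge> norm p powr \<alpha> / K - K \<and> h p \<ge> - K" and "K > 1"
  shows "D p \<bullet> p \<ge> norm p powr \<alpha> / K - (2 * K) \<and> h p \<ge> - (2 * K)"
  using K[of p] \<open>K > 1\<close> by auto

lemma pt_ba:
  fixes h :: "'a::euclidean_space \<Rightarrow> real"
  assumes tg: "\<And>p q. h q \<ge> h p + D p \<bullet> (q - p)"
    and K: "\<And>p. D p \<bullet> p \<ge> norm p powr \<alpha> / K - K \<and> h p \<ge> - K" and "K > 1" "\<alpha> > 1"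
  shows "h p \<ge> norm p powr \<alpha> / (K * 2 powr \<alpha>) - 2 * K"
proof -
  define q where "q = (1/2) *\<^sub>R p"
  have "h p \<ge> h q + D q \<bullet> (p - q)" by (rule tg)
  moreover have "p - q = q"
  proof -
    have "p - q = (1 - 1/2) *\<^sub>R p" by (simp only: q_def scaleR_diff_left scaleR_one)
    then show ?thesis by (simp add: q_def)
  qed
  moreover have "norm q powr \<alpha> = norm p powr \<alpha> / 2 powr \<alpha>"
    by (simp add: q_def powr_divide)
  ultimately have "h p \<ge> h q + (norm p powr \<alpha> / 2 powr \<alpha>) / K - K"
    using K[of q] by simp
  then show ?thesis using K[of q] by (simp add: field_simps)
qed

lemma pt_up:
  fixes h :: "'a::euclidean_space \<Rightarrow> real"
  assumes tg: "\<And>p q. h q \<ge> h p + D p \<bullet> (q - p)" and h0: "h 0 \<le> C"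
    and Db: "\<And>p. norm (D p) \<le> C * norm p powr (\<alpha> - 1) + C"
    and "C > 1" "\<alpha> > 1"
  shows "h p \<le> 2 * C + 2 * C * norm p powr \<alpha>"
proof -
  define n where "n = norm p powr \<alpha>"
  define r where "r = norm p"
  have n0: "n \<ge> 0" by (simp add: n_def)
  have r0: "r \<ge> 0" by (simp add: r_def)
  have "h 0 \<ge> h p + D p \<bullet> (0 - p)" by (rule tg)
  then have "h p \<le> C + D p \<bullet> p" using h0 by simp
  also have "D p \<bullet> p \<le> norm (D p) * r" unfolding r_def by (rule norm_cauchy_schwarz)
  also have "\<dots> \<le> (C * r powr (\<alpha> - 1) + C) * r"
    using Db[of p] r0 unfolding r_def by (intro mult_right_mono) auto
  also have "\<dots> = C * n + C * r"
  proof (cases "r = 0")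
    case True then show ?thesis by (simp add: n_def r_def)
  next
    case False
    then have "r powr (\<alpha> - 1) * r = r powr \<alpha>" using r0
      by (simp add: powr_mult_base mult.commute)
    then show ?thesis by (simp add: n_def r_def[symmetric] algebra_simps)
  qed
  finally have hp1: "h p \<le> C + C * n + C * r" by simp
  have rn: "r \<le> n + 1"
  proof (cases "r \<ge> 1")
    case True
    then have "r powr 1 \<le> r powr \<alpha>" using \<open>\<alpha> > 1\<close> by (intro powr_mono) auto
    then show ?thesis using True by (simp add: n_def r_def)
  qed (use n0 in auto)
  have "C * r \<le> C * (n + 1)" using rn \<open>C > 1\<close> by simp
  with hp1 show ?thesis by (simp add: algebra_simps n_def)
qed

lemma pt_ac:
  fixes h :: "'a::euclidean_space \<Rightarrow> real"
  assumes tg: "\<And>p q. h q \<ge> h p + D p \<bullet> (q - p)" and h0: "h 0 \<le> C"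
    and Db: "\<And>p. norm (D p) \<le> C * norm p powr (\<alpha> - 1) + C"
    and K: "\<And>p. h p \<ge> norm p powr \<alpha> / K - K" and "K > 1" "C > 1" "\<alpha> > 1"
    and t: "t > 0" "t \<le> 1/2" "t powr (\<alpha> - 1) * (4 * C * K) \<le> 1"
  shows "- h p + D p \<bullet> p \<ge> norm p powr \<alpha> / (2 * K / t + 2 * (K + 2 * C) + 1)
       - (2 * K / t + 2 * (K + 2 * C) + 1)
     \<and> h p \<ge> - (2 * K / t + 2 * (K + 2 * C) + 1)"
proof -
  define n where "n = norm p powr \<alpha>"
  have n0: "n \<ge> 0" by (simp add: n_def)
  have hK: "h p \<ge> - K" using K[of p] \<open>K > 1\<close>
    by (smt (verit) divide_nonneg_pos powr_ge_zero)
  have htp: "h (t *\<^sub>R p) \<le> 2 * C + 2 * C * norm (t *\<^sub>R p) powr \<alpha>"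
    by (rule pt_up[OF tg h0 Db \<open>C > 1\<close> \<open>\<alpha> > 1\<close>])
  moreover have "norm (t *\<^sub>R p) powr \<alpha> = t powr \<alpha> * n"
    using t by (simp add: n_def powr_mult)
  moreover have "t powr \<alpha> = t * t powr (\<alpha> - 1)" using t
    by (simp add: powr_mult_base)
  ultimately have htp2: "h (t *\<^sub>R p) \<le> 2 * C + (t * n) * (2 * C * t powr (\<alpha> - 1))"
    by (simp add: algebra_simps)
  have "2 * C * t powr (\<alpha> - 1) \<le> 1 / (2 * K)"
    using t(3) \<open>K > 1\<close> by (simp add: field_simps)
  then have "(t * n) * (2 * C * t powr (\<alpha> - 1)) \<le> (t * n) * (1 / (2 * K))"
    using t n0 by (intro mult_left_mono) auto
  with htp2 have htp3: "h (t *\<^sub>R p) \<le> 2 * C + t * n / (2 * K)" by simp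
  have "h (t *\<^sub>R p) \<ge> h p + D p \<bullet> (t *\<^sub>R p - p)" by (rule tg)
  moreover have "D p \<bullet> (t *\<^sub>R p - p) = (t - 1) * (D p \<bullet> p)"
    by (simp add: algebra_simps inner_diff_right)
  moreover have "(1 - t) * (D p \<bullet> p - h p) = D p \<bullet> p - t * (D p \<bullet> p) - h p + t * h p"
    by (simp add: algebra_simps)
  moreover have "(t - 1) * (D p \<bullet> p) = t * (D p \<bullet> p) - D p \<bullet> p"
    by (simp add: algebra_simps)
  ultimately have A: "(1 - t) * (D p \<bullet> p - h p) \<ge> t * h p - h (t *\<^sub>R p)"
    by linarith
  have "t * h p \<ge> t * (n / K - K)" using K[of p] t by (simp add: n_def)
  moreover have "t * (n / K - K) = t * n / K - t * K" by (simp add: algebra_simps)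
  moreover have "t * K \<le> K" using t \<open>K > 1\<close> by simp
  moreover have "t * n / K - t * n / (2 * K) = t * n / (2 * K)" by (simp add: field_simps)
  ultimately have X: "(1 - t) * (D p \<bullet> p - h p) \<ge> t * n / (2 * K) - (K + 2 * C)"
    using A htp3 by linarith
  define X where "X = t * n / (2 * K) - (K + 2 * C)"
  define Lv where "Lv = D p \<bullet> p - h p"
  have XL: "(1 - t) * Lv \<ge> X" using X unfolding X_def Lv_def .
  have L: "D p \<bullet> p - h p \<ge> t * n / (2 * K) - 2 * (K + 2 * C)"
  proof (cases "X \<ge> 0")
    case True
    have "Lv \<ge> 0"
    proof (rule ccontr)
      assume "\<not> Lv \<ge> 0"
      then have "(1 - t) * Lv < 0" using t by (intro mult_pos_neg) auto
      then show False using XL True by linarith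
    qed
    then have "(1 - t) * Lv \<le> Lv" using t mult_left_le_one_le[of Lv "1 - t"] by simp
    then have "Lv \<ge> X" using XL by linarith
    moreover have "K + 2 * C \<ge> 0" using \<open>K > 1\<close> \<open>C > 1\<close> by linarith
    ultimately show ?thesis unfolding X_def Lv_def by argo
  next
    case False
    have "Lv \<ge> 2 * X"
    proof (cases "Lv \<ge> 0")
      case True then show ?thesis using False by linarith
    next
      case False
      then have "(1 - t) * Lv \<le> (1/2) * Lv" using t by (intro mult_right_mono_neg) auto
      then show ?thesis using XL by linarith
    qed
    moreover have "t * n / (2 * K) \<ge> 0" using t n0 \<open>K > 1\<close> by simp
    ultimately show ?thesis unfolding X_def Lv_def by argo
  qed
  define M where "M = 2 * K / t + 2 * (K + 2 * C) + 1"
  have "2 * K / t > 0" using t \<open>K > 1\<close> by simp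
  moreover have M2: "M \<ge> 2 * K / t" using \<open>C > 1\<close> \<open>K > 1\<close> unfolding M_def by argo
  ultimately have "n / M \<le> n / (2 * K / t)" using n0
  proof (intro divide_left_mono)
    show "0 < M * (2 * K / t)" using \<open>2 * K / t > 0\<close> M2 by (intro mult_pos_pos) auto
  qed auto
  also have "n / (2 * K / t) = t * n / (2 * K)" by simp
  finally have "- h p + D p \<bullet> p \<ge> n / M - M" using L \<open>C > 1\<close> \<open>K > 1\<close> t \<open>2 * K / t > 0\<close>
    unfolding M_def by argo
  moreover have "h p \<ge> - M" using hK \<open>K > 1\<close> \<open>C > 1\<close> t \<open>2 * K / t > 0\<close> unfolding M_def by argo
  ultimately show ?thesis by (simp add: M_def n_def)
qed
theorem proposition2p2:
  fixes \<Omega> :: "'a::euclidean_space set"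
    and H :: "'a \<Rightarrow> 'a \<Rightarrow> real"
    and DH :: "'a \<Rightarrow> 'a \<Rightarrow> 'a"
    and \<alpha> C :: real
  assumes "open \<Omega>"
    and "\<alpha> > 1"
    and "AE x in lebesgue. x \<in> \<Omega> \<longrightarrow>
           (\<forall>p. (H x has_derivative (\<lambda>v. DH x p \<bullet> v)) (at p))
         \<and> continuous_on UNIV (DH x)
         \<and> convex_on UNIV (H x)"
    and "C > 1"
    and "AE x in lebesgue. x \<in> \<Omega> \<longrightarrow>
           (\<forall>p. norm (DH x p) \<le> C * norm p powr (\<alpha> - 1) + C) \<and> H x 0 \<le> C"
  shows "(cond_a \<Omega> H \<alpha> \<longleftrightarrow> cond_b \<Omega> H DH \<alpha>) \<and> (cond_b \<Omega> H DH \<alpha> \<longleftrightarrow> cond_c \<Omega> H DH \<alpha>)"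
proof -
  have G: "AE x in lebesgue. x \<in> \<Omega> \<longrightarrow> (\<forall>p q. H x q \<ge> H x p + DH x p \<bullet> (q - p))
      \<and> H x 0 \<le> C \<and> (\<forall>p. norm (DH x p) \<le> C * norm p powr (\<alpha> - 1) + C)"
    using assms(3) assms(5) by eventually_elim (blast intro: tangent)
  have ab: "cond_b \<Omega> H DH \<alpha>" if hyp: "cond_a \<Omega> H \<alpha>"
  proof -
    obtain K where K: "K > 1" and AK: "AE x in lebesgue. x \<in> \<Omega> \<longrightarrow>
      (\<forall>p. H x p \<ge> norm p powr \<alpha> / K - K)"
      using hyp unfolding cond_a_def by blast
    have "AE x in lebesgue. x \<in> \<Omega> \<longrightarrow>
      (\<forall>p. DH x p \<bullet> p \<ge> norm p powr \<alpha> / (K + C) - (K + C) \<and> H x p \<ge> - (K + C))"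
      using AK G
    proof eventually_elim
      case (elim x)
      show ?case
      proof (intro impI allI)
        fix p assume "x \<in> \<Omega>"
        with elim show "DH x p \<bullet> p \<ge> norm p powr \<alpha> / (K + C) - (K + C) \<and> H x p \<ge> - (K + C)"
          using pt_ab[of "H x" "DH x" C \<alpha> K p] K assms(4) by blast
      qed
    qed
    moreover have "K + C > 1" using K assms(4) by simp
    ultimately show ?thesis unfolding cond_b_def by blast
  qed
  have ba: "cond_a \<Omega> H \<alpha>" if hyp: "cond_b \<Omega> H DH \<alpha>"
  proof -
    obtain K where K: "K > 1" and AK: "AE x in lebesgue. x \<in> \<Omega> \<longrightarrow>
      (\<forall>p. DH x p \<bullet> p \<ge> norm p powr \<alpha> / K - K \<and> H x p \<ge> - K)"
      using hyp unfolding cond_b_def by blast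
    define M where "M = K * 2 powr \<alpha> + 2 * K"
    have M: "M \<ge> K * 2 powr \<alpha>" "M \<ge> 2 * K" "K * 2 powr \<alpha> > 0"
      using K by (auto simp: M_def)
    have "AE x in lebesgue. x \<in> \<Omega> \<longrightarrow> (\<forall>p. H x p \<ge> norm p powr \<alpha> / M - M)"
      using AK G
    proof eventually_elim
      case (elim x)
      show ?case
      proof (intro impI allI)
        fix p assume "x \<in> \<Omega>"
        with elim have "H x p \<ge> norm p powr \<alpha> / (K * 2 powr \<alpha>) - 2 * K"
          using pt_ba[of "H x" "DH x" \<alpha> K p] K assms(2) by blast
        moreover have "norm p powr \<alpha> / M \<le> norm p powr \<alpha> / (K * 2 powr \<alpha>)"
          using M by (intro divide_left_mono) auto
        ultimately show "H x p \<ge> norm p powr \<alpha> / M - M" using M by argo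
      qed
    qed
    moreover have "M > 1" using K M by simp
    ultimately show ?thesis unfolding cond_a_def by blast
  qed
  have cb: "cond_b \<Omega> H DH \<alpha>" if hyp: "cond_c \<Omega> H DH \<alpha>"
  proof -
    obtain K where K: "K > 1" and AK: "AE x in lebesgue. x \<in> \<Omega> \<longrightarrow>
      (\<forall>p. - H x p + DH x p \<bullet> p \<ge> norm p powr \<alpha> / K - K \<and> H x p \<ge> - K)"
      using hyp unfolding cond_c_def by blast
    have "AE x in lebesgue. x \<in> \<Omega> \<longrightarrow>
      (\<forall>p. DH x p \<bullet> p \<ge> norm p powr \<alpha> / (2 * K) - (2 * K) \<and> H x p \<ge> - (2 * K))"
      using AK
    proof eventually_elim
      case (elim x)
      show ?case
      proof (intro impI allI)
        fix p assume "x \<in> \<Omega>"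
        with elim have "DH x p \<bullet> p \<ge> norm p powr \<alpha> / K - (2 * K) \<and> H x p \<ge> - (2 * K)"
          using pt_cb[where h="H x" and D="DH x" and \<alpha>=\<alpha> and K=K and p=p] K by blast
        moreover have "norm p powr \<alpha> / (2 * K) \<le> norm p powr \<alpha> / K"
          using K by (intro divide_left_mono) auto
        ultimately show "DH x p \<bullet> p \<ge> norm p powr \<alpha> / (2 * K) - (2 * K) \<and> H x p \<ge> - (2 * K)"
          by argo
      qed
    qed
    moreover have "2 * K > 1" using K by simp
    ultimately show ?thesis unfolding cond_b_def by blast
  qed
  have ac: "cond_c \<Omega> H DH \<alpha>" if hyp: "cond_a \<Omega> H \<alpha>"
  proof -
    obtain K where K: "K > 1" and AK: "AE x in lebesgue. x \<in> \<Omega> \<longrightarrow>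
      (\<forall>p. H x p \<ge> norm p powr \<alpha> / K - K)"
      using hyp unfolding cond_a_def by blast
    define b where "b = (1 / (4 * C * K)) powr (1 / (\<alpha> - 1))"
    define t where "t = min (1/2) b"
    have b0: "b > 0" using K assms(4) by (simp add: b_def)
    have t: "t > 0" "t \<le> 1/2" using b0 by (auto simp: t_def)
    have "t powr (\<alpha> - 1) \<le> b powr (\<alpha> - 1)"
      using t b0 assms(2) by (intro powr_mono2) (auto simp: t_def)
    also have "b powr (\<alpha> - 1) = 1 / (4 * C * K)"
      using assms(2,4) K by (simp add: b_def powr_powr)
    finally have t3: "t powr (\<alpha> - 1) * (4 * C * K) \<le> 1"
      using K assms(4) by (simp add: field_simps)
    define M where "M = 2 * K / t + 2 * (K + 2 * C) + 1"
    have "AE x in lebesgue. x \<in> \<Omega> \<longrightarrow>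
      (\<forall>p. - H x p + DH x p \<bullet> p \<ge> norm p powr \<alpha> / M - M \<and> H x p \<ge> - M)"
      using AK G
    proof eventually_elim
      case (elim x)
      show ?case
      proof (intro impI allI)
        fix p assume "x \<in> \<Omega>"
        with elim show "- H x p + DH x p \<bullet> p \<ge> norm p powr \<alpha> / M - M \<and> H x p \<ge> - M"
          using pt_ac[of "H x" "DH x" C \<alpha> K t p] K assms(2,4) t t3 unfolding M_def by blast
      qed
    qed
    moreover have "M > 1" using t K assms(4) unfolding M_def
      by (smt (verit) divide_pos_pos)
    ultimately show ?thesis unfolding cond_c_def by blast
  qed
  show ?thesis using ab ba cb ac by blast
qed

end
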